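(* Let $\mathfrak{q}$ be a $\mathrm{Lie}$-nilpotent Leibniz algebra of class $k$ and let $0\to\mathfrak{n}\to\mathfrak{g}\xrightarrow{\pi}\mathfrak{q}\to0$ be a $\mathrm{Lie}$-central extension. Fix a free presentation $0\to\mathfrak{r}\to\mathfrak{f}\xrightarrow{\rho}\mathfrak{g}\to0$, put $\mathfrak{s}=\ker(\pi\circ\rho)$, so that $\mathcal{M}^{\mathrm{Lie}}(\mathfrak{q})=\frac{\mathfrak{s}\cap[\mathfrak{f},\mathfrak{f}]_{\mathrm{Lie}}}{[\mathfrak{f},\mathfrak{s}]_{\mathrm{Lie}}}$, and let $\theta:\mathcal{M}^{\mathrm{Lie}}(\mathfrak{q})\to\mathfrak{n}$ be $\theta(x+[\mathfrak{f},\mathfrak{s}]_{\mathrm{Lie}})=\rho(x)$. Let $\tau:\mathcal{M}^{\mathrm{Lie}}(\mathfrak{q})\to\mathcal{M}^{\mathrm{Lie}}(\mathfrak{q}/\mathfrak{q}^{[k]})$ be the map induced by the canonical projection $\mathfrak{q}\twoheadrightarrow\mathfrak{q}/\mathfrak{q}^{[k]}$ (concretely, with $\mathfrak{t}=\ker(\mathfrak{f}\to\mathfrak{q}/\mathfrak{q}^{[k]})$, $\tau(x+[\mathfrak{f},\mathfrak{s}]_{\mathrm{Lie}})=x+[\mathfrak{f},\mathfrak{t}]_{\mathrm{Lie}}$). Then $\mathfrak{g}$ is $\mathrm{Lie}$-nilpotent of class $k$ if and only if $\theta$ vanishes on $\ker(\tau)$.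
   Context: Fix a field $\mathbb{K}$ with $\frac12\in\mathbb{K}$. A Leibniz algebra is a $\mathbb{K}$-vector space with a bilinear bracket satisfying $[x,[y,z]]=[[x,y],z]-[[x,z],y]$. For two-sided ideals $\mathfrak{m},\mathfrak{n}$, $[\mathfrak{m},\mathfrak{n}]_{\mathrm{Lie}}$ is the subspace spanned by all $[m,n]+[n,m]$. $Z_{\mathrm{Lie}}(\mathfrak{g})=\{z:[q,z]+[z,q]=0\ \forall q\}$; a surjection $\mathfrak{g}\to\mathfrak{q}$ is a $\mathrm{Lie}$-central extension if its kernel lies in $Z_{\mathrm{Lie}}(\mathfrak{g})$. Lower $\mathrm{Lie}$-central series: $\mathfrak{h}^{[1]}=\mathfrak{h}$, $\mathfrak{h}^{[i]}=[\mathfrak{h}^{[i-1]},\mathfrak{h}]_{\mathrm{Lie}}$; class $k$ means $\mathfrak{h}^{[k+1]}=0\ne\mathfrak{h}^{[k]}$. For a free presentation $0\to\mathfrak{r}\to\mathfrak{f}\to\mathfrak{g}\to0$ ($\mathfrak{f}$ free Leibniz), $\mathcal{M}^{\mathrm{Lie}}(\mathfrak{g})=\frac{\mathfrak{r}\cap[\mathfrak{f},\mathfrak{f}]_{\mathrm{Lie}}}{[\mathfrak{f},\mathfrak{r}]_{\mathrm{Lie}}}$, independent of the presentation up to isomorphism. *)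

theory Defs
  imports Main
begin

text \<open>A Leibniz algebra over a field 'k is modelled on a whole type 'a (an additive
abelian group) with a scalar multiplication sc and a bracket br.\<close>

definition vspace :: "('k::field \<Rightarrow> 'a::ab_group_add \<Rightarrow> 'a) \<Rightarrow> bool" where
  "vspace sc \<longleftrightarrow>
     (\<forall>a x y. sc a (x + y) = sc a x + sc a y) \<and>
     (\<forall>a b x. sc (a + b) x = sc a x + sc b x) \<and>
     (\<forall>a b x. sc a (sc b x) = sc (a * b) x) \<and>
     (\<forall>x. sc 1 x = x)"

definition leibniz ::
  "('k::field \<Rightarrow> 'a::ab_group_add \<Rightarrow> 'a) \<Rightarrow> ('a \<Rightarrow> 'a \<Rightarrow> 'a) \<Rightarrow> bool" where
  "leibniz sc br \<longleftrightarrow> vspace sc \<and>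
     (\<forall>x y z. br (x + y) z = br x z + br y z) \<and>
     (\<forall>x y z. br x (y + z) = br x y + br x z) \<and>
     (\<forall>a x y. br (sc a x) y = sc a (br x y)) \<and>
     (\<forall>a x y. br x (sc a y) = sc a (br x y)) \<and>
     (\<forall>x y z. br x (br y z) = br (br x y) z - br (br x z) y)"

definition lsubspace :: "('k::field \<Rightarrow> 'a::ab_group_add \<Rightarrow> 'a) \<Rightarrow> 'a set \<Rightarrow> bool" where
  "lsubspace sc A \<longleftrightarrow> 0 \<in> A \<and> (\<forall>x\<in>A. \<forall>y\<in>A. x + y \<in> A) \<and> (\<forall>c. \<forall>x\<in>A. sc c x \<in> A)"

definition lspan :: "('k::field \<Rightarrow> 'a::ab_group_add \<Rightarrow> 'a) \<Rightarrow> 'a set \<Rightarrow> 'a set" where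
  "lspan sc S = \<Inter>{A. lsubspace sc A \<and> S \<subseteq> A}"

definition lin_indep :: "('k::field \<Rightarrow> 'a::ab_group_add \<Rightarrow> 'a) \<Rightarrow> 'a set \<Rightarrow> bool" where
  "lin_indep sc S \<longleftrightarrow>
     (\<forall>T c. finite T \<longrightarrow> T \<subseteq> S \<longrightarrow> (\<Sum>v\<in>T. sc (c v) v) = 0 \<longrightarrow> (\<forall>v\<in>T. c v = 0))"

definition lie_br_set ::
  "('k::field \<Rightarrow> 'a::ab_group_add \<Rightarrow> 'a) \<Rightarrow> ('a \<Rightarrow> 'a \<Rightarrow> 'a) \<Rightarrow> 'a set \<Rightarrow> 'a set \<Rightarrow> 'a set" where
  "lie_br_set sc br M N = lspan sc {br m n + br n m | m n. m \<in> M \<and> n \<in> N}"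

definition lie_center ::
  "('a::ab_group_add \<Rightarrow> 'a \<Rightarrow> 'a) \<Rightarrow> 'a set" where
  "lie_center br = {z. \<forall>q. br q z + br z q = 0}"

text \<open>lcs0 sc br i = h^[i+1].\<close>
primrec lcs0 ::
  "('k::field \<Rightarrow> 'a::ab_group_add \<Rightarrow> 'a) \<Rightarrow> ('a \<Rightarrow> 'a \<Rightarrow> 'a) \<Rightarrow> nat \<Rightarrow> 'a set" where
  "lcs0 sc br 0 = UNIV"
| "lcs0 sc br (Suc i) = lie_br_set sc br (lcs0 sc br i) UNIV"

definition lower_lie_central ::
  "('k::field \<Rightarrow> 'a::ab_group_add \<Rightarrow> 'a) \<Rightarrow> ('a \<Rightarrow> 'a \<Rightarrow> 'a) \<Rightarrow> nat \<Rightarrow> 'a set" where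
  "lower_lie_central sc br i = lcs0 sc br (i - 1)"

definition lie_nilpotent_class ::
  "('k::field \<Rightarrow> 'a::ab_group_add \<Rightarrow> 'a) \<Rightarrow> ('a \<Rightarrow> 'a \<Rightarrow> 'a) \<Rightarrow> nat \<Rightarrow> bool" where
  "lie_nilpotent_class sc br k \<longleftrightarrow> 1 \<le> k \<and>
     lower_lie_central sc br (k + 1) = {0} \<and> lower_lie_central sc br k \<noteq> {0}"

definition leib_hom ::
  "('k::field \<Rightarrow> 'a::ab_group_add \<Rightarrow> 'a) \<Rightarrow> ('a \<Rightarrow> 'a \<Rightarrow> 'a) \<Rightarrow>
   ('k \<Rightarrow> 'b::ab_group_add \<Rightarrow> 'b) \<Rightarrow> ('b \<Rightarrow> 'b \<Rightarrow> 'b) \<Rightarrow> ('a \<Rightarrow> 'b) \<Rightarrow> bool" where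
  "leib_hom sc1 br1 sc2 br2 h \<longleftrightarrow>
     (\<forall>x y. h (x + y) = h x + h y) \<and> (\<forall>c x. h (sc1 c x) = sc2 c (h x)) \<and>
     (\<forall>x y. h (br1 x y) = br2 (h x) (h y))"

fun lnorm :: "('a \<Rightarrow> 'a \<Rightarrow> 'a) \<Rightarrow> 'a \<Rightarrow> 'a list \<Rightarrow> 'a" where
  "lnorm br x [] = x"
| "lnorm br x (y # ys) = lnorm br (br x y) ys"

text \<open>This is the standard basis of the free (right) Leibniz algebra
(the reduced tensor algebra on span X).\<close>
definition free_leibniz ::
  "('k::field \<Rightarrow> 'a::ab_group_add \<Rightarrow> 'a) \<Rightarrow> ('a \<Rightarrow> 'a \<Rightarrow> 'a) \<Rightarrow> bool" where
  "free_leibniz sc br \<longleftrightarrow> leibniz sc br \<and>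
     (\<exists>X. let W = {(x, ys). x \<in> X \<and> set ys \<subseteq> X};
              B = (\<lambda>(x, ys). lnorm br x ys) ` W
          in inj_on (\<lambda>(x, ys). lnorm br x ys) W \<and> lin_indep sc B \<and> lspan sc B = UNIV)"

end

theory Submission
  imports Defs
begin

lemma lsubspace_lspan: "lsubspace sc (lspan sc S)"
  unfolding lspan_def lsubspace_def by auto

lemma zero_lspan: "0 \<in> lspan sc S"
  unfolding lspan_def lsubspace_def by auto

lemma lspan_sub: "S \<subseteq> lspan sc S"
  unfolding lspan_def by auto

lemma lspan_least: "lsubspace sc A \<Longrightarrow> S \<subseteq> A \<Longrightarrow> lspan sc S \<subseteq> A"
  unfolding lspan_def by auto

lemma lspan_mono: "S \<subseteq> T \<Longrightarrow> lspan sc S \<subseteq> lspan sc T"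
  by (meson lspan_least lspan_sub lsubspace_lspan order_trans)

lemma hom_zero:
  fixes h :: "'a::ab_group_add \<Rightarrow> 'b::ab_group_add"
  assumes "\<forall>x y. h (x + y) = h x + h y"
  shows "h 0 = 0"
proof -
  have "h 0 = h 0 + h 0" using assms by (metis add.right_neutral)
  thus ?thesis by simp
qed

lemma hom_diff:
  fixes h :: "'a::ab_group_add \<Rightarrow> 'b::ab_group_add"
  assumes "\<forall>x y. h (x + y) = h x + h y"
  shows "h (x - y) = h x - h y"
proof -
  have "h x = h (x - y) + h y" using assms by (metis diff_add_cancel)
  thus ?thesis by (simp add: algebra_simps)
qed

lemma image_lspan:
  fixes h :: "'a::ab_group_add \<Rightarrow> 'b::ab_group_add"
  assumes add: "\<forall>x y. h (x + y) = h x + h y" and sc: "\<forall>c x. h (sc1 c x) = sc2 c (h x)"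
  shows "h ` lspan sc1 S = lspan sc2 (h ` S)"
proof
  let ?P = "{x. h x \<in> lspan sc2 (h ` S)}"
  have L2: "lsubspace sc2 (lspan sc2 (h ` S))" by (rule lsubspace_lspan)
  have "lsubspace sc1 ?P"
    unfolding lsubspace_def
  proof (intro conjI ballI allI)
    show "0 \<in> ?P" using L2 hom_zero[OF add] unfolding lsubspace_def by simp
  next
    fix x y assume "x \<in> ?P" "y \<in> ?P"
    thus "x + y \<in> ?P" using L2 add unfolding lsubspace_def by simp
  next
    fix c x assume "x \<in> ?P"
    thus "sc1 c x \<in> ?P" using L2 sc unfolding lsubspace_def by simp
  qed
  moreover have "S \<subseteq> ?P" using lspan_sub by blast
  ultimately have "lspan sc1 S \<subseteq> ?P" by (rule lspan_least)
  thus "h ` lspan sc1 S \<subseteq> lspan sc2 (h ` S)" by blast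
next
  have L: "lsubspace sc1 (lspan sc1 S)" by (rule lsubspace_lspan)
  have "lsubspace sc2 (h ` lspan sc1 S)"
    unfolding lsubspace_def
  proof (intro conjI ballI allI)
    have "0 \<in> lspan sc1 S" using L unfolding lsubspace_def by simp
    hence "h 0 \<in> h ` lspan sc1 S" by (rule imageI)
    thus "0 \<in> h ` lspan sc1 S" using hom_zero[OF add] by simp
  next
    fix x y assume "x \<in> h ` lspan sc1 S" "y \<in> h ` lspan sc1 S"
    then obtain a b where ab: "a \<in> lspan sc1 S" "b \<in> lspan sc1 S" "x = h a" "y = h b" by blast
    have "a + b \<in> lspan sc1 S" using L ab unfolding lsubspace_def by simp
    hence "h (a + b) \<in> h ` lspan sc1 S" by (rule imageI)
    thus "x + y \<in> h ` lspan sc1 S" using ab add by simp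
  next
    fix c x assume "x \<in> h ` lspan sc1 S"
    then obtain a where ab: "a \<in> lspan sc1 S" "x = h a" by blast
    have "sc1 c a \<in> lspan sc1 S" using L ab unfolding lsubspace_def by simp
    hence "h (sc1 c a) \<in> h ` lspan sc1 S" by (rule imageI)
    thus "sc2 c x \<in> h ` lspan sc1 S" using ab sc by simp
  qed
  moreover have "h ` S \<subseteq> h ` lspan sc1 S" using lspan_sub by blast
  ultimately show "lspan sc2 (h ` S) \<subseteq> h ` lspan sc1 S" by (rule lspan_least)
qed

lemma image_lie_br_set:
  assumes "leib_hom sc1 br1 sc2 br2 h"
  shows "h ` lie_br_set sc1 br1 M N = lie_br_set sc2 br2 (h ` M) (h ` N)"
proof -
  have add: "\<forall>x y. h (x + y) = h x + h y" and sc: "\<forall>c x. h (sc1 c x) = sc2 c (h x)"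
    and br: "\<forall>x y. h (br1 x y) = br2 (h x) (h y)" using assms unfolding leib_hom_def by auto
  have "h ` {br1 m n + br1 n m | m n. m \<in> M \<and> n \<in> N} =
        {br2 m n + br2 n m | m n. m \<in> h ` M \<and> n \<in> h ` N}"
  proof
    show "h ` {br1 m n + br1 n m | m n. m \<in> M \<and> n \<in> N} \<subseteq>
        {br2 m n + br2 n m | m n. m \<in> h ` M \<and> n \<in> h ` N}"
    proof
      fix v assume "v \<in> h ` {br1 m n + br1 n m | m n. m \<in> M \<and> n \<in> N}"
      then obtain a b where "a \<in> M" "b \<in> N" "v = h (br1 a b + br1 b a)" by blast
      hence "v = br2 (h a) (h b) + br2 (h b) (h a)" "h a \<in> h ` M" "h b \<in> h ` N" using add br by auto
      thus "v \<in> {br2 m n + br2 n m | m n. m \<in> h ` M \<and> n \<in> h ` N}" by blast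
    qed
    show "{br2 m n + br2 n m | m n. m \<in> h ` M \<and> n \<in> h ` N} \<subseteq>
        h ` {br1 m n + br1 n m | m n. m \<in> M \<and> n \<in> N}"
    proof
      fix v assume "v \<in> {br2 m n + br2 n m | m n. m \<in> h ` M \<and> n \<in> h ` N}"
      then obtain a b where "a \<in> M" "b \<in> N" "v = br2 (h a) (h b) + br2 (h b) (h a)" by blast
      hence "v = h (br1 a b + br1 b a)" "br1 a b + br1 b a \<in> {br1 m n + br1 n m | m n. m \<in> M \<and> n \<in> N}"
        using add br by auto
      thus "v \<in> h ` {br1 m n + br1 n m | m n. m \<in> M \<and> n \<in> N}" by blast
    qed
  qed
  thus ?thesis unfolding lie_br_set_def using image_lspan[OF add sc] by metis
qed

lemma image_lcs0:
  assumes "leib_hom sc1 br1 sc2 br2 h" "surj h"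
  shows "h ` lcs0 sc1 br1 i = lcs0 sc2 br2 i"
proof (induction i)
  case 0 then show ?case using assms(2) by simp
next
  case (Suc i)
  have "h ` lcs0 sc1 br1 (Suc i) = lie_br_set sc2 br2 (h ` lcs0 sc1 br1 i) (h ` UNIV)"
    by (simp add: image_lie_br_set[OF assms(1)])
  also have "\<dots> = lcs0 sc2 br2 (Suc i)" using Suc.IH assms(2) by simp
  finally show ?case .
qed

lemma lie_br_set_sym: "lie_br_set sc br M N = lie_br_set sc br N M"
proof -
  have "{br m n + br n m | m n. m \<in> M \<and> n \<in> N} = {br m n + br n m | m n. m \<in> N \<and> n \<in> M}"
    by (auto simp: add.commute) (metis add.commute)+
  thus ?thesis unfolding lie_br_set_def by simp
qed

theorem mainTheorem9:
  fixes scf :: "'k::field \<Rightarrow> 'f::ab_group_add \<Rightarrow> 'f" and brf :: "'f \<Rightarrow> 'f \<Rightarrow> 'f"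
    and scg :: "'k \<Rightarrow> 'g::ab_group_add \<Rightarrow> 'g" and brg :: "'g \<Rightarrow> 'g \<Rightarrow> 'g"
    and scq :: "'k \<Rightarrow> 'q::ab_group_add \<Rightarrow> 'q" and brq :: "'q \<Rightarrow> 'q \<Rightarrow> 'q"
    and \<pi> :: "'g \<Rightarrow> 'q" and \<rho> :: "'f \<Rightarrow> 'g" and k :: nat
  assumes char: "(2::'k) \<noteq> 0"
    and q_leib: "leibniz scq brq"
    and g_leib: "leibniz scg brg"
    and f_free: "free_leibniz scf brf"
    and q_nil: "lie_nilpotent_class scq brq k"
    and \<pi>_hom: "leib_hom scg brg scq brq \<pi>" and \<pi>_surj: "surj \<pi>"
    and \<pi>_central: "{x. \<pi> x = 0} \<subseteq> lie_center brg"
    and \<rho>_hom: "leib_hom scf brf scg brg \<rho>" and \<rho>_surj: "surj \<rho>"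
  shows "lie_nilpotent_class scg brg k \<longleftrightarrow>
    (let s = {x. \<pi> (\<rho> x) = 0};
         t = {x. \<pi> (\<rho> x) \<in> lower_lie_central scq brq k}
     in \<forall>x \<in> s \<inter> lie_br_set scf brf UNIV UNIV \<inter> lie_br_set scf brf UNIV t. \<rho> x = 0)"
proof -
  define Tq where "Tq = lcs0 scq brq (k - 1)"
  define Gk where "Gk = lcs0 scg brg (k - 1)"
  have k1: "1 \<le> k" and qk: "lcs0 scq brq k = {0}" and qk1: "Tq \<noteq> {0}"
    using q_nil unfolding lie_nilpotent_class_def lower_lie_central_def Tq_def by auto
  have Suck: "Suc (k - 1) = k" using k1 by simp
  have \<pi>add: "\<forall>x y. \<pi> (x + y) = \<pi> x + \<pi> y" using \<pi>_hom unfolding leib_hom_def by auto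
  have \<rho>add: "\<forall>x y. \<rho> (x + y) = \<rho> x + \<rho> y" using \<rho>_hom unfolding leib_hom_def by auto
  have \<pi>Gk: "\<pi> ` Gk = Tq" unfolding Gk_def Tq_def by (rule image_lcs0[OF \<pi>_hom \<pi>_surj])
  have \<pi>G: "\<pi> ` lcs0 scg brg k = {0}" using image_lcs0[OF \<pi>_hom \<pi>_surj] qk by metis
  have gk: "lcs0 scg brg k = lie_br_set scg brg UNIV Gk"
    unfolding Gk_def using lie_br_set_sym Suck by (metis lcs0.simps(2))
  define t where "t = {x. \<pi> (\<rho> x) \<in> lower_lie_central scq brq k}"
  define s where "s = {x. \<pi> (\<rho> x) = 0}"
  have t: "t = {x. \<pi> (\<rho> x) \<in> Tq}"
    unfolding t_def Tq_def lower_lie_central_def by simp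
  have \<rho>t: "\<rho> ` t = {y. \<pi> y \<in> Tq}"
  proof
    show "\<rho> ` t \<subseteq> {y. \<pi> y \<in> Tq}" unfolding t by auto
    show "{y. \<pi> y \<in> Tq} \<subseteq> \<rho> ` t"
    proof
      fix y assume y: "y \<in> {y. \<pi> y \<in> Tq}"
      obtain x where "y = \<rho> x" using \<rho>_surj by (metis surjD)
      thus "y \<in> \<rho> ` t" using y unfolding t by blast
    qed
  qed
  have gens: "{brg m n + brg n m | m n. m \<in> UNIV \<and> n \<in> {y. \<pi> y \<in> Tq}} =
              {brg m n + brg n m | m n. m \<in> UNIV \<and> n \<in> Gk}"
  proof
    show "{brg m n + brg n m | m n. m \<in> UNIV \<and> n \<in> Gk} \<subseteq>
          {brg m n + brg n m | m n. m \<in> UNIV \<and> n \<in> {y. \<pi> y \<in> Tq}}"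
      using \<pi>Gk by blast
    show "{brg m n + brg n m | m n. m \<in> UNIV \<and> n \<in> {y. \<pi> y \<in> Tq}} \<subseteq>
          {brg m n + brg n m | m n. m \<in> UNIV \<and> n \<in> Gk}"
    proof
      fix v assume "v \<in> {brg m n + brg n m | m n. m \<in> UNIV \<and> n \<in> {y. \<pi> y \<in> Tq}}"
      then obtain m n where v: "v = brg m n + brg n m" and n: "\<pi> n \<in> Tq" by blast
      then obtain a where a: "a \<in> Gk" "\<pi> n = \<pi> a" using \<pi>Gk by (metis imageE)
      define z where "z = n - a"
      have "\<pi> z = 0" unfolding z_def using hom_diff[OF \<pi>add] a by simp
      hence zc: "brg m z + brg z m = 0" using \<pi>_central unfolding lie_center_def by auto
      have bl: "\<forall>x y z. brg (x + y) z = brg x z + brg y z"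
        and br: "\<forall>x y z. brg x (y + z) = brg x y + brg x z"
        using g_leib unfolding leibniz_def by auto
      have nz: "n = a + z" unfolding z_def by simp
      have "v = brg m a + brg a m + (brg m z + brg z m)"
        unfolding v nz using bl br by (simp add: algebra_simps)
      hence "v = brg m a + brg a m" using zc by simp
      thus "v \<in> {brg m n + brg n m | m n. m \<in> UNIV \<and> n \<in> Gk}" using a by blast
    qed
  qed
  have \<rho>Lt: "\<rho> ` lie_br_set scf brf UNIV t = lcs0 scg brg k"
    using image_lie_br_set[OF \<rho>_hom, of UNIV t] \<rho>_surj \<rho>t gens gk
    unfolding lie_br_set_def by simp
  have Lt_s: "lie_br_set scf brf UNIV t \<subseteq> s"
    using \<rho>Lt \<pi>G unfolding s_def by auto
  have Lt_L: "lie_br_set scf brf UNIV t \<subseteq> lie_br_set scf brf UNIV UNIV"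
    unfolding lie_br_set_def by (rule lspan_mono) blast
  have zeroG: "0 \<in> lcs0 scg brg k"
    unfolding gk lie_br_set_def by (rule zero_lspan)
  have RHS: "(\<forall>x \<in> s \<inter> lie_br_set scf brf UNIV UNIV \<inter> lie_br_set scf brf UNIV t. \<rho> x = 0)
      \<longleftrightarrow> lcs0 scg brg k = {0}"
  proof -
    have "(\<forall>x \<in> s \<inter> lie_br_set scf brf UNIV UNIV \<inter> lie_br_set scf brf UNIV t. \<rho> x = 0)
        \<longleftrightarrow> (\<forall>x \<in> lie_br_set scf brf UNIV t. \<rho> x = 0)" using Lt_s Lt_L by blast
    also have "\<dots> \<longleftrightarrow> \<rho> ` lie_br_set scf brf UNIV t \<subseteq> {0}" by blast
    also have "\<dots> \<longleftrightarrow> lcs0 scg brg k = {0}" using \<rho>Lt zeroG by blast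
    finally show ?thesis .
  qed
  have Gk0: "Gk \<noteq> {0}"
  proof
    assume "Gk = {0}"
    hence "Tq = {0}" using \<pi>Gk hom_zero[OF \<pi>add] by simp
    thus False using qk1 by simp
  qed
  have LHS: "lie_nilpotent_class scg brg k \<longleftrightarrow> lcs0 scg brg k = {0}"
    using k1 Gk0 unfolding lie_nilpotent_class_def lower_lie_central_def Gk_def by simp
  show ?thesis unfolding Let_def using LHS RHS unfolding s_def t_def by simp
qed

end
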